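(* For every $n\ge 3$, the local metric dimension of the convex polytope graph $S_n$ satisfies $lmd(S_n)=2$ if $n$ is odd and $lmd(S_n)=3$ if $n$ is even.
   Context: For $n\ge 3$, $S_n$ is the graph with vertex set $\{a_i,b_i,c_i,d_i : 1\le i\le n\}$ and edge set $\{a_ia_{i+1}, b_ib_{i+1}, c_ic_{i+1}, d_id_{i+1}, a_{i+1}b_i, a_ib_i, b_ic_i, c_id_i : 1\le i\le n\}$, indices taken modulo $n$. $d(u,v)$ is the graph distance. A vertex $w$ resolves $u,v$ if $d(u,w)\neq d(v,w)$. A set $W$ of vertices is a local resolving set if every two adjacent vertices are resolved by some element of $W$; $lmd(G)$ is the minimum cardinality of a local resolving set of $G$. *)

theory Defs
  imports Main
begin

definition is_walk :: "'v set \<Rightarrow> ('v \<Rightarrow> 'v \<Rightarrow> bool) \<Rightarrow> 'v list \<Rightarrow> bool" where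
  "is_walk V E p \<longleftrightarrow> p \<noteq> [] \<and> set p \<subseteq> V \<and>
     (\<forall>i. Suc i < length p \<longrightarrow> E (p ! i) (p ! Suc i))"

definition gdist :: "'v set \<Rightarrow> ('v \<Rightarrow> 'v \<Rightarrow> bool) \<Rightarrow> 'v \<Rightarrow> 'v \<Rightarrow> nat" where
  "gdist V E u v = (LEAST k. \<exists>p. is_walk V E p \<and> hd p = u \<and> last p = v \<and> length p = Suc k)"

definition resolves :: "'v set \<Rightarrow> ('v \<Rightarrow> 'v \<Rightarrow> bool) \<Rightarrow> 'v \<Rightarrow> 'v \<Rightarrow> 'v \<Rightarrow> bool" where
  "resolves V E w u v \<longleftrightarrow> gdist V E u w \<noteq> gdist V E v w"

definition local_resolving_set :: "'v set \<Rightarrow> ('v \<Rightarrow> 'v \<Rightarrow> bool) \<Rightarrow> 'v set \<Rightarrow> bool" where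
  "local_resolving_set V E W \<longleftrightarrow> W \<subseteq> V \<and>
     (\<forall>u\<in>V. \<forall>v\<in>V. E u v \<longrightarrow> (\<exists>w\<in>W. resolves V E w u v))"

definition lmd :: "'v set \<Rightarrow> ('v \<Rightarrow> 'v \<Rightarrow> bool) \<Rightarrow> nat" where
  "lmd V E = (LEAST k. \<exists>W. local_resolving_set V E W \<and> finite W \<and> card W = k)"

text \<open>Vertices a_i, b_i, c_i, d_i; indices 1..n are represented as 0..n-1 (mod n).\<close>
datatype vtx = A nat | B nat | C nat | D nat

definition S_vertices :: "nat \<Rightarrow> vtx set" where
  "S_vertices n = (\<Union>i\<in>{..<n}. {A i, B i, C i, D i})"

definition S_gen :: "nat \<Rightarrow> vtx \<Rightarrow> vtx \<Rightarrow> bool" where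
  "S_gen n x y \<longleftrightarrow> (\<exists>i<n.
      (x = A i \<and> y = A (Suc i mod n)) \<or>
      (x = B i \<and> y = B (Suc i mod n)) \<or>
      (x = C i \<and> y = C (Suc i mod n)) \<or>
      (x = D i \<and> y = D (Suc i mod n)) \<or>
      (x = A (Suc i mod n) \<and> y = B i) \<or>
      (x = A i \<and> y = B i) \<or>
      (x = B i \<and> y = C i) \<or>
      (x = C i \<and> y = D i))"

definition S_adj :: "nat \<Rightarrow> vtx \<Rightarrow> vtx \<Rightarrow> bool" where
  "S_adj n x y \<longleftrightarrow> S_gen n x y \<or> S_gen n y x"

end

theory Submission
  imports Defs
begin


lemma is_walk_snoc:
  assumes "q \<noteq> []"
  shows "is_walk V E (q @ [x]) \<longleftrightarrow> is_walk V E q \<and> x \<in> V \<and> E (last q) x"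
proof -
  have L: "last q = q ! (length q - 1)" using assms by (simp add: last_conv_nth)
  show ?thesis
  proof
    assume w: "is_walk V E (q @ [x])"
    have a: "\<forall>i. Suc i < length q \<longrightarrow> E (q ! i) (q ! Suc i)"
    proof (intro allI impI)
      fix i assume "Suc i < length q"
      with w show "E (q ! i) (q ! Suc i)" unfolding is_walk_def
        by (metis (no_types, lifting) Suc_lessD length_append_singleton less_SucI nth_append)
    qed
    have b: "E (last q) x"
    proof -
      obtain j where j: "length q = Suc j" using assms by (cases q) auto
      from w have "E ((q@[x]) ! j) ((q@[x]) ! Suc j)" unfolding is_walk_def using j by auto
      then show ?thesis using j L by (simp add: nth_append)
    qed
    show "is_walk V E q \<and> x \<in> V \<and> E (last q) x" using w a b assms unfolding is_walk_def by auto
  next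
    assume h: "is_walk V E q \<and> x \<in> V \<and> E (last q) x"
    show "is_walk V E (q @ [x])" unfolding is_walk_def
    proof (intro conjI allI impI)
      show "q @ [x] \<noteq> []" by simp
      show "set (q @ [x]) \<subseteq> V" using h unfolding is_walk_def by auto
      fix i assume i: "Suc i < length (q @ [x])"
      show "E ((q @ [x]) ! i) ((q @ [x]) ! Suc i)"
      proof (cases "Suc i < length q")
        case True then show ?thesis using h unfolding is_walk_def by (simp add: nth_append)
      next
        case False then have "Suc i = length q" using i by simp
        then have "i = length q - 1" by simp
        then show ?thesis using h L \<open>Suc i = length q\<close> by (simp add: nth_append)
      qed
    qed
  qed
qed

lemma gdist_char:
  fixes \<phi> :: "'v \<Rightarrow> nat"
  assumes uV: "u \<in> V" and vV: "v \<in> V"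
    and lip: "\<And>x y. x \<in> V \<Longrightarrow> y \<in> V \<Longrightarrow> E x y \<Longrightarrow> \<phi> y \<le> \<phi> x + 1"
    and zero: "\<phi> u = 0"
    and zu: "\<And>x. x \<in> V \<Longrightarrow> \<phi> x = 0 \<Longrightarrow> x = u"
    and desc: "\<And>x. x \<in> V \<Longrightarrow> \<phi> x > 0 \<Longrightarrow> \<exists>y\<in>V. E y x \<and> \<phi> y + 1 = \<phi> x"
  shows "gdist V E u v = \<phi> v"
proof -
  have ex: "\<forall>x\<in>V. \<phi> x = k \<longrightarrow> (\<exists>p. is_walk V E p \<and> hd p = u \<and> last p = x \<and> length p = Suc k)" for k
  proof (induction k)
    case 0
    show ?case
    proof (intro ballI impI)
      fix x assume "x \<in> V" "\<phi> x = 0"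
      then have "x = u" using zu by auto
      then show "\<exists>p. is_walk V E p \<and> hd p = u \<and> last p = x \<and> length p = Suc 0"
        by (intro exI[of _ "[u]"]) (simp add: is_walk_def uV)
    qed
  next
    case (Suc k)
    show ?case
    proof (intro ballI impI)
      fix x assume xV: "x \<in> V" and fx: "\<phi> x = Suc k"
      then obtain y where yV: "y \<in> V" and Eyx: "E y x" and fy: "\<phi> y + 1 = \<phi> x" using desc by force
      then have "\<phi> y = k" using fx by simp
      then obtain p where p: "is_walk V E p" "hd p = u" "last p = y" "length p = Suc k"
        using Suc yV by blast
      have pn: "p \<noteq> []" using p(1) unfolding is_walk_def by simp
      show "\<exists>p. is_walk V E p \<and> hd p = u \<and> last p = x \<and> length p = Suc (Suc k)"
        by (intro exI[of _ "p @ [x]"]) (use p pn xV Eyx in \<open>simp add: is_walk_snoc\<close>)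
    qed
  qed
  have lb: "is_walk V E p \<longrightarrow> hd p = u \<longrightarrow> \<phi> (last p) \<le> length p - 1" for p
  proof (induction p rule: rev_induct)
    case Nil then show ?case by (simp add: is_walk_def)
  next
    case (snoc x q)
    show ?case
    proof (cases "q = []")
      case True then show ?thesis using zero by simp
    next
      case False
      show ?thesis
      proof (intro impI)
        assume w: "is_walk V E (q @ [x])" and h: "hd (q @ [x]) = u"
        then have wq: "is_walk V E q" and xV: "x \<in> V" and Eq: "E (last q) x"
          using False is_walk_snoc by metis+
        have "last q \<in> V" using wq False unfolding is_walk_def by auto
        then have "\<phi> x \<le> \<phi> (last q) + 1" using lip xV Eq by blast
        moreover have "\<phi> (last q) \<le> length q - 1" using snoc wq h False by simp
        moreover have "length q > 0" using False by simp
        ultimately show "\<phi> (last (q @ [x])) \<le> length (q @ [x]) - 1" by (simp del: length_greater_0_conv)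
      qed
    qed
  qed
  show ?thesis unfolding gdist_def
  proof (rule Least_equality)
    show "\<exists>p. is_walk V E p \<and> hd p = u \<and> last p = v \<and> length p = Suc (\<phi> v)" using ex vV by blast
  next
    fix k assume "\<exists>p. is_walk V E p \<and> hd p = u \<and> last p = v \<and> length p = Suc k"
    then obtain p where "is_walk V E p" "hd p = u" "last p = v" "length p = Suc k" by blast
    then show "\<phi> v \<le> k" using lb by fastforce
  qed
qed



fun pos :: "vtx \<Rightarrow> int" where
  "pos (A i) = 2*int i" | "pos (B i) = 2*int i+1" | "pos (C i) = 2*int i+1" | "pos (D i) = 2*int i+1"
fun ht :: "vtx \<Rightarrow> int" where
  "ht (A i) = 0" | "ht (B i) = 0" | "ht (C i) = 1" | "ht (D i) = 2"
fun idx :: "vtx \<Rightarrow> nat" where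
  "idx (A i) = i" | "idx (B i) = i" | "idx (C i) = i" | "idx (D i) = i"

definition icd :: "int \<Rightarrow> int \<Rightarrow> int" where "icd N d = min \<bar>d\<bar> (N - \<bar>d\<bar>)"
definition ifd :: "nat \<Rightarrow> vtx \<Rightarrow> vtx \<Rightarrow> int" where
  "ifd n x y = (icd (2*int n) (pos x - pos y) + 1) div 2 + \<bar>ht x - ht y\<bar>"
definition wr :: "int \<Rightarrow> int \<Rightarrow> int" where
  "wr N x = (if N \<le> x then x - N else if x < 0 then x + N else x)"
definition nx :: "nat \<Rightarrow> nat \<Rightarrow> nat" where "nx n i = (if Suc i = n then 0 else Suc i)"
definition pv :: "nat \<Rightarrow> nat \<Rightarrow> nat" where "pv n i = (if i = 0 then n - 1 else i - 1)"

lemma Suc_mod_nx: "i < n \<Longrightarrow> Suc i mod n = nx n i"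
  by (simp add: nx_def mod_Suc)

lemma nx_lt: "i < n \<Longrightarrow> nx n i < n" by (auto simp: nx_def)
lemma pv_lt: "i < n \<Longrightarrow> pv n i < n" by (auto simp: pv_def)
lemma nx_pv: "i < n \<Longrightarrow> nx n (pv n i) = i" by (auto simp: nx_def pv_def)

lemma SV: "x \<in> S_vertices n \<longleftrightarrow> idx x < n"
  by (cases x) (auto simp: S_vertices_def)

lemma S_adj_char: "S_adj n x y \<longleftrightarrow> (\<exists>i<n.
      (x = A i \<and> y = A (nx n i)) \<or> (x = B i \<and> y = B (nx n i)) \<or>
      (x = C i \<and> y = C (nx n i)) \<or> (x = D i \<and> y = D (nx n i)) \<or>
      (x = A (nx n i) \<and> y = B i) \<or> (x = A i \<and> y = B i) \<or> (x = B i \<and> y = C i) \<or> (x = C i \<and> y = D i) \<or>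
      (y = A i \<and> x = A (nx n i)) \<or> (y = B i \<and> x = B (nx n i)) \<or>
      (y = C i \<and> x = C (nx n i)) \<or> (y = D i \<and> x = D (nx n i)) \<or>
      (y = A (nx n i) \<and> x = B i) \<or> (y = A i \<and> x = B i) \<or> (y = B i \<and> x = C i) \<or> (y = C i \<and> x = D i))"
  unfolding S_adj_def S_gen_def by (auto simp: Suc_mod_nx)

lemma pos_range: "idx x < n \<Longrightarrow> 0 \<le> pos x \<and> pos x < 2 * int n"
  by (cases x) auto

lemma int_nx: "i < n \<Longrightarrow> int (nx n i) = (if Suc i = n then 0 else int i + 1)"
  by (auto simp: nx_def)

lemma adj_struct:
  assumes "S_adj n x y"
  shows "(ht x = ht y \<and> (\<bar>pos y - pos x\<bar> \<le> 2 \<or> \<bar>pos y - pos x - 2*int n\<bar> \<le> 2 \<or> \<bar>pos y - pos x + 2*int n\<bar> \<le> 2))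
     \<or> (pos x = pos y \<and> \<bar>ht x - ht y\<bar> = 1)"
  using assms unfolding S_adj_char by (auto simp: int_nx split: if_splits)

lemma icd_step:
  "\<bar>d\<bar> < N \<Longrightarrow> \<bar>d'\<bar> < N \<Longrightarrow> \<bar>d' - d\<bar> \<le> 2 \<or> \<bar>d' - d - N\<bar> \<le> 2 \<or> \<bar>d' - d + N\<bar> \<le> 2 \<Longrightarrow> icd N d' \<le> icd N d + 2"
  unfolding icd_def min_def by (simp add: abs_if split: if_splits; elim disjE; linarith)

lemma icd_nonneg: "\<bar>d\<bar> < N \<Longrightarrow> 0 \<le> icd N d"
  unfolding icd_def by simp

lemma icd_zero: "\<bar>d\<bar> < N \<Longrightarrow> icd N d = 0 \<Longrightarrow> d = 0"
  unfolding icd_def min_def by (simp split: if_splits)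

lemma icd_0[simp]: "icd N 0 = 0 \<longleftrightarrow> 0 \<le> N"
  unfolding icd_def by auto

lemma div_step: "(c'::int) \<le> c + 2 \<Longrightarrow> (c'+1) div 2 \<le> (c+1) div 2 + 1"
  by presburger

lemma ifd_nonneg: assumes "idx u < n" "idx x < n" shows "0 \<le> ifd n u x"
proof -
  have "0 \<le> icd (2*int n) (pos u - pos x)" using icd_nonneg[of "pos u - pos x" "2*int n"] pos_range[of u n] pos_range[of x n] assms by auto
  then show ?thesis unfolding ifd_def by simp
qed

lemma lip:
  assumes "idx u < n" "idx x < n" "idx y < n" "S_adj n x y"
  shows "ifd n u y \<le> ifd n u x + 1"
proof -
  have ru: "0 \<le> pos u \<and> pos u < 2 * int n" and rx: "0 \<le> pos x \<and> pos x < 2 * int n"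
    and ry: "0 \<le> pos y \<and> pos y < 2 * int n" using pos_range assms by blast+
  from adj_struct[OF assms(4)] show ?thesis
  proof
    assume h: "ht x = ht y \<and> (\<bar>pos y - pos x\<bar> \<le> 2 \<or> \<bar>pos y - pos x - 2*int n\<bar> \<le> 2 \<or> \<bar>pos y - pos x + 2*int n\<bar> \<le> 2)"
    have "icd (2*int n) (pos u - pos y) \<le> icd (2*int n) (pos u - pos x) + 2"
      apply (rule icd_step) using ru rx ry h by auto
    then show ?thesis using h div_step unfolding ifd_def by fastforce
  next
    assume h: "pos x = pos y \<and> \<bar>ht x - ht y\<bar> = 1"
    then show ?thesis unfolding ifd_def by auto
  qed
qed


lemma L3:
  assumes "0 \<le> p" "p < N" "0 \<le> q" "q < N" "2 \<le> icd N (p-q)"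
  shows "icd N (p - wr N (q+2)) = icd N (p-q) - 2 \<or> icd N (p - wr N (q-2)) = icd N (p-q) - 2"
proof -
  have "2*\<bar>p-q\<bar> \<le> N \<or> 2*\<bar>p-q\<bar> > N" by linarith
  then show ?thesis
  proof
    assume h: "2*\<bar>p-q\<bar> \<le> N"
    then have e: "icd N (p-q) = \<bar>p-q\<bar>" unfolding icd_def by simp
    show ?thesis
    proof (cases "p \<ge> q")
      case True
      then have "q+2 < N" using assms e by linarith
      then have "wr N (q+2) = q+2" unfolding wr_def using assms by simp
      then show ?thesis using True e h assms unfolding icd_def by simp
    next
      case False
      then have "q \<ge> 2" using assms e by linarith
      then have "wr N (q-2) = q-2" unfolding wr_def using assms by simp
      then show ?thesis using False e h assms unfolding icd_def by simp
    qed
  next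
    assume h: "2*\<bar>p-q\<bar> > N"
    then have e: "icd N (p-q) = N - \<bar>p-q\<bar>" unfolding icd_def by simp
    show ?thesis
    proof (cases "p \<ge> q")
      case True
      then have "q \<ge> 2 \<or> q < 2" by linarith
      then show ?thesis
      proof
        assume q2: "q \<ge> 2"
        then have "wr N (q-2) = q-2" unfolding wr_def using assms by simp
        then show ?thesis using True e h assms q2 unfolding icd_def by simp
      next
        assume q2: "q < 2"
        then have "wr N (q-2) = q-2+N" unfolding wr_def using assms by simp
        then show ?thesis using True e h assms q2 unfolding icd_def by simp
      qed
    next
      case False
      then have "q+2 < N \<or> q + 2 \<ge> N" by linarith
      then show ?thesis
      proof
        assume q2: "q+2 < N"
        then have "wr N (q+2) = q+2" unfolding wr_def using assms by simp
        then show ?thesis using False e h assms q2 unfolding icd_def by simp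
      next
        assume q2: "q+2 \<ge> N"
        then have "wr N (q+2) = q+2-N" unfolding wr_def using assms by simp
        then show ?thesis using False e h assms q2 unfolding icd_def by simp
      qed
    qed
  qed
qed

lemma L4:
  assumes "0 \<le> p" "p < N" "0 \<le> q" "q < N" "icd N (p-q) = 1"
  shows "p = wr N (q+1) \<or> p = wr N (q - 1)"
  using assms unfolding icd_def wr_def min_def by (simp add: abs_if split: if_splits; linarith)

lemma parity: "icd (2*int n) (2*k) \<noteq> 1"
  unfolding icd_def min_def by (simp add: abs_if split: if_splits; presburger)

lemma wr_nx: "j < n \<Longrightarrow> 0 \<le> c \<Longrightarrow> c \<le> 1 \<Longrightarrow> 2*int (nx n j) + c = wr (2*int n) (2*int j + 2 + c)"
  by (auto simp: nx_def wr_def; presburger)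
lemma wr_pv: "j < n \<Longrightarrow> 0 \<le> c \<Longrightarrow> c \<le> 1 \<Longrightarrow> 2*int (pv n j) + c = wr (2*int n) (2*int j - 2 + c)"
  by (auto simp: pv_def wr_def of_nat_diff; presburger)
lemma wr_id: "0 \<le> x \<Longrightarrow> x < N \<Longrightarrow> wr N x = x" by (simp add: wr_def)

lemma adjI1: "i < n \<Longrightarrow> S_adj n (A (nx n i)) (A i) \<and> S_adj n (B (nx n i)) (B i) \<and> S_adj n (C (nx n i)) (C i) \<and> S_adj n (D (nx n i)) (D i)"
  unfolding S_adj_char by (intro conjI; rule exI[of _ i]; simp)
lemma adjI2: "i < n \<Longrightarrow> S_adj n (A (pv n i)) (A i) \<and> S_adj n (B (pv n i)) (B i) \<and> S_adj n (C (pv n i)) (C i) \<and> S_adj n (D (pv n i)) (D i)"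
  unfolding S_adj_char by (intro conjI; rule exI[of _ "pv n i"]; simp add: pv_lt nx_pv)
lemma adjI3: "i < n \<Longrightarrow> S_adj n (A (nx n i)) (B i) \<and> S_adj n (A i) (B i) \<and> S_adj n (B i) (C i) \<and> S_adj n (C i) (D i)
   \<and> S_adj n (B i) (A i) \<and> S_adj n (B i) (A (nx n i)) \<and> S_adj n (C i) (B i) \<and> S_adj n (D i) (C i)"
  unfolding S_adj_char by (intro conjI; rule exI[of _ i]; simp)
lemma adjI4: "i < n \<Longrightarrow> S_adj n (B (pv n i)) (A i)"
  unfolding S_adj_char by (rule exI[of _ "pv n i"]; simp add: pv_lt nx_pv)

lemma horiz_p:
  assumes "idx x < n"
  shows "\<exists>y. idx y < n \<and> S_adj n y x \<and> ht y = ht x \<and> pos y = wr (2*int n) (pos x + 2)"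
proof (cases x)
  case (A j) then show ?thesis using assms adjI1[of j n] wr_nx[of j n 0] nx_lt[of j n]
    by (intro exI[of _ "A (nx n j)"]) auto
next
  case (B j) then show ?thesis using assms adjI1[of j n] wr_nx[of j n 1] nx_lt[of j n]
    by (intro exI[of _ "B (nx n j)"]) (auto simp: add.assoc)
next
  case (C j) then show ?thesis using assms adjI1[of j n] wr_nx[of j n 1] nx_lt[of j n]
    by (intro exI[of _ "C (nx n j)"]) (auto simp: add.assoc)
next
  case (D j) then show ?thesis using assms adjI1[of j n] wr_nx[of j n 1] nx_lt[of j n]
    by (intro exI[of _ "D (nx n j)"]) (auto simp: add.assoc)
qed

lemma horiz_m:
  assumes "idx x < n"
  shows "\<exists>y. idx y < n \<and> S_adj n y x \<and> ht y = ht x \<and> pos y = wr (2*int n) (pos x - 2)"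
proof (cases x)
  case (A j) then show ?thesis using assms adjI2[of j n] wr_pv[of j n 0] pv_lt[of j n]
    by (intro exI[of _ "A (pv n j)"]) auto
next
  case (B j) then show ?thesis using assms adjI2[of j n] wr_pv[of j n 1] pv_lt[of j n]
    by (intro exI[of _ "B (pv n j)"]) (auto simp: algebra_simps)
next
  case (C j) then show ?thesis using assms adjI2[of j n] wr_pv[of j n 1] pv_lt[of j n]
    by (intro exI[of _ "C (pv n j)"]) (auto simp: algebra_simps)
next
  case (D j) then show ?thesis using assms adjI2[of j n] wr_pv[of j n 1] pv_lt[of j n]
    by (intro exI[of _ "D (pv n j)"]) (auto simp: algebra_simps)
qed


fun isA :: "vtx \<Rightarrow> bool" where "isA (A i) = True" | "isA _ = False"

lemma rim_nb:
  assumes "idx x < n" "ht x = 0" "p = wr (2*int n) (pos x + 1) \<or> p = wr (2*int n) (pos x - 1)"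
  shows "\<exists>y. idx y < n \<and> S_adj n y x \<and> ht y = 0 \<and> pos y = p"
proof (cases x)
  case (A j)
  have j: "j < n" using assms A by simp
  from assms(3) show ?thesis
  proof
    assume "p = wr (2*int n) (pos x + 1)"
    then have "p = 2*int j + 1" using A j by (simp add: wr_def)
    then show ?thesis using A j adjI3[of j n] by (intro exI[of _ "B j"]) simp
  next
    assume "p = wr (2*int n) (pos x - 1)"
    then have "p = 2*int (pv n j) + 1" using A j wr_pv[of j n 1] by simp
    then show ?thesis using A j adjI4[of j n] pv_lt[of j n] by (intro exI[of _ "B (pv n j)"]) simp
  qed
next
  case (B j)
  have j: "j < n" using assms B by simp
  from assms(3) show ?thesis
  proof
    assume "p = wr (2*int n) (pos x + 1)"
    then have "p = 2*int (nx n j)" using B j wr_nx[of j n 0] by (simp add: add.commute)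
    then show ?thesis using B j adjI3[of j n] nx_lt[of j n] by (intro exI[of _ "A (nx n j)"]) simp
  next
    assume "p = wr (2*int n) (pos x - 1)"
    then have "p = 2*int j" using B j by (simp add: wr_def)
    then show ?thesis using B j adjI3[of j n] by (intro exI[of _ "A j"]) simp
  qed
qed (use assms in auto)

lemma down_nb:
  assumes "idx x < n" "ht x \<noteq> 0"
  shows "\<exists>y. idx y < n \<and> S_adj n y x \<and> ht y = ht x - 1 \<and> pos y = pos x"
proof (cases x)
  case (C j) then show ?thesis using assms adjI3[of j n] by (intro exI[of _ "B j"]) simp
next
  case (D j) then show ?thesis using assms adjI3[of j n] by (intro exI[of _ "C j"]) simp
qed (use assms in auto)

lemma vert_nb:
  assumes "idx x < n" "idx u < n" "pos u = pos x" "ht u \<noteq> ht x"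
  shows "\<exists>y. idx y < n \<and> S_adj n y x \<and> pos y = pos x \<and> \<bar>ht u - ht y\<bar> + 1 = \<bar>ht u - ht x\<bar>"
proof (cases x)
  case (A j) then show ?thesis using assms by (cases u) (auto, presburger+)
next
  case (B j) then show ?thesis using assms adjI3[of j n] by (intro exI[of _ "C j"]) (cases u; auto)
next
  case (C j) then show ?thesis using assms adjI3[of j n]
    by (cases u) (auto intro: exI[of _ "B j"] exI[of _ "D j"])
next
  case (D j) then show ?thesis using assms adjI3[of j n] by (intro exI[of _ "C j"]) (cases u; auto)
qed

lemma notA_pos: "\<not> isA x \<Longrightarrow> pos x = 2 * int (idx x) + 1"
  by (cases x) auto

lemma desc:
  assumes u: "idx u < n" and x: "idx x < n" and pz: "0 < ifd n u x"
  shows "\<exists>y. idx y < n \<and> S_adj n y x \<and> ifd n u y + 1 = ifd n u x"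
proof -
  define N where "N = 2 * int n"
  define c where "c = icd N (pos u - pos x)"
  have ru: "0 \<le> pos u" "pos u < N" and rx: "0 \<le> pos x" "pos x < N"
    using pos_range u x unfolding N_def by blast+
  have fx: "ifd n u x = (c+1) div 2 + \<bar>ht u - ht x\<bar>" unfolding ifd_def c_def N_def by simp
  have c0: "0 \<le> c" unfolding c_def using icd_nonneg ru rx by auto
  consider "2 \<le> c" | "c = 0" | "c = 1" using c0 by linarith
  then show ?thesis
  proof cases
    case 1
    from L3[OF ru rx 1[unfolded c_def]]
    obtain y where y: "idx y < n" "S_adj n y x" "ht y = ht x" "icd N (pos u - pos y) = c - 2"
      using horiz_p[OF x] horiz_m[OF x] unfolding N_def c_def by metis
    have "ifd n u y = (c - 1) div 2 + \<bar>ht u - ht x\<bar>" unfolding ifd_def using y unfolding N_def by simp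
    moreover have "(c - 1) div 2 + 1 = (c+1) div 2" by presburger
    ultimately show ?thesis using y fx by (intro exI[of _ y]) simp
  next
    case 2
    then have "pos u = pos x" using icd_zero[of "pos u - pos x" N] ru rx unfolding c_def by simp
    moreover then have "ht u \<noteq> ht x" using pz fx 2 by auto
    ultimately obtain y where y: "idx y < n" "S_adj n y x" "pos y = pos x" "\<bar>ht u - ht y\<bar> + 1 = \<bar>ht u - ht x\<bar>"
      using vert_nb[OF x u] by blast
    have "ifd n u y = \<bar>ht u - ht y\<bar>" unfolding ifd_def using y \<open>pos u = pos x\<close> by (simp add: icd_def)
    then show ?thesis using y fx 2 by (intro exI[of _ y]) simp
  next
    case 3
    have pp: "pos u = wr N (pos x + 1) \<or> pos u = wr N (pos x - 1)" using L4[OF ru rx] 3 unfolding c_def by blast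
    show ?thesis
    proof (cases "isA x")
      case True
      then have hx: "ht x = 0" by (cases x) auto
      obtain y where y: "idx y < n" "S_adj n y x" "ht y = 0" "pos y = pos u"
        using rim_nb[OF x hx pp[unfolded N_def]] by blast
      have "ifd n u y = \<bar>ht u\<bar>" unfolding ifd_def using y by (simp add: icd_def)
      then show ?thesis using y fx 3 hx by (intro exI[of _ y]) simp
    next
      case False
      have "isA u"
      proof (rule ccontr)
        assume "\<not> isA u"
        then have "pos u - pos x = 2 * (int (idx u) - int (idx x))" using False notA_pos by simp
        then show False using 3 parity[of n "int (idx u) - int (idx x)"] unfolding c_def N_def by simp
      qed
      then have hu: "ht u = 0" by (cases u) auto
      show ?thesis
      proof (cases "ht x = 0")
        case True
        obtain y where y: "idx y < n" "S_adj n y x" "ht y = 0" "pos y = pos u"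
          using rim_nb[OF x True pp[unfolded N_def]] by blast
        have "ifd n u y = 0" unfolding ifd_def using y hu by (simp add: icd_def)
        then show ?thesis using y fx 3 hu True by (intro exI[of _ y]) simp
      next
        case False
        obtain y where y: "idx y < n" "S_adj n y x" "ht y = ht x - 1" "pos y = pos x"
          using down_nb[OF x False] by blast
        have hx: "ht x > 0" using False by (cases x) auto
        have "ifd n u y = 1 + (ht x - 1)" unfolding ifd_def using y hu 3 hx unfolding c_def N_def by simp
        then show ?thesis using y fx 3 hu hx by (intro exI[of _ y]) simp
      qed
    qed
  qed
qed


lemma same_vtx: "pos x = pos u \<Longrightarrow> ht x = ht u \<Longrightarrow> x = u"
  by (cases x; cases u) (auto, presburger+)

lemma gdist_fd:
  assumes u: "idx u < n" and v: "idx v < n"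
  shows "gdist (S_vertices n) (S_adj n) u v = nat (ifd n u v)"
proof (rule gdist_char)
  show "u \<in> S_vertices n" "v \<in> S_vertices n" using u v by (simp_all add: SV)
  show "nat (ifd n u y) \<le> nat (ifd n u x) + 1" if "x \<in> S_vertices n" "y \<in> S_vertices n" "S_adj n x y" for x y
    using lip[of u n x y] ifd_nonneg[of u n x] ifd_nonneg[of u n y] that u by (simp add: SV)
  show "nat (ifd n u u) = 0" unfolding ifd_def by (simp add: icd_def)
  show "x = u" if "x \<in> S_vertices n" "nat (ifd n u x) = 0" for x
  proof -
    have xn: "idx x < n" using that by (simp add: SV)
    have c0: "0 \<le> icd (2*int n) (pos u - pos x)" using icd_nonneg pos_range[OF u] pos_range[OF xn] by auto
    have "ifd n u x = 0" using that(2) ifd_nonneg[OF u xn] by simp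
    then have "icd (2*int n) (pos u - pos x) = 0" "ht u = ht x" unfolding ifd_def using c0 by auto
    moreover have "\<bar>pos u - pos x\<bar> < 2*int n" using pos_range[OF u] pos_range[OF xn] by auto
    ultimately have "pos u = pos x" using icd_zero by fastforce
    then show ?thesis using same_vtx \<open>ht u = ht x\<close> by metis
  qed
  show "\<exists>y\<in>S_vertices n. S_adj n y x \<and> nat (ifd n u y) + 1 = nat (ifd n u x)"
    if xV: "x \<in> S_vertices n" and xp: "0 < nat (ifd n u x)" for x
  proof -
    have xn: "idx x < n" using xV by (simp add: SV)
    obtain y where "idx y < n" "S_adj n y x" "ifd n u y + 1 = ifd n u x"
      using desc[OF u xn] xp by (metis zero_less_nat_eq)
    then show ?thesis using ifd_nonneg[OF u, of y] by (intro bexI[of _ y]) (auto simp: SV)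
  qed
qed



definition G :: "int \<Rightarrow> int \<Rightarrow> int \<Rightarrow> int" where "G N q p = (icd N (q - p) + 1) div 2"

lemma icd_pos: "0 \<le> d \<Longrightarrow> d < 2*n \<Longrightarrow> icd (2*n) d = (if d \<le> n then d else 2*n - d)"
  unfolding icd_def by auto

lemma REL: assumes "0 \<le> q" "q < N" "0 \<le> p" "p < N" shows "G N q p = G N (wr N (q-p)) 0"
proof (cases "p \<le> q")
  case True then show ?thesis using assms unfolding G_def wr_def by simp
next
  case False
  then have "wr N (q-p) = q - p + N" using assms unfolding wr_def by simp
  moreover have "icd N (q-p+N) = icd N (q-p)" using False assms unfolding icd_def by (simp add: abs_if min_def)
  ultimately show ?thesis unfolding G_def by simp
qed

lemma wr_shift: assumes "0 \<le> q" "q < N" "0 \<le> p" "p < N" "k = 1 \<or> k = 2" "2 < N"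
  shows "wr N (wr N (q+k) - p) = wr N (wr N (q-p) + k)"
  using assms unfolding wr_def by auto

lemma wr_range: "0 \<le> q \<Longrightarrow> q < N \<Longrightarrow> -N \<le> x \<Longrightarrow> x < 2*N \<Longrightarrow> 0 \<le> wr N x \<and> wr N x < N"
  unfolding wr_def by auto

lemma Rim0:
  assumes "0 \<le> r" "r < 2*n" "2 \<le> n"
  shows "G (2*n) r 0 = G (2*n) (wr (2*n) (r+1)) 0 \<longleftrightarrow> (odd r \<and> r < n) \<or> (even r \<and> n \<le> r)"
proof -
  consider "r + 1 \<le> n" | "n \<le> r" "r + 1 < 2*n" | "r = 2*n - 1" using assms by linarith
  then show ?thesis
  proof cases
    case 1
    then have "wr (2*n) (r+1) = r+1" unfolding wr_def using assms by simp
    then show ?thesis unfolding G_def using 1 assms by (simp add: icd_pos; presburger)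
  next
    case 2
    then have "wr (2*n) (r+1) = r+1" unfolding wr_def using assms by simp
    then show ?thesis unfolding G_def using 2 assms by (simp add: icd_pos; presburger)
  next
    case 3
    then have "wr (2*n) (r+1) = 0" unfolding wr_def using assms by simp
    then show ?thesis unfolding G_def using 3 assms by (simp add: icd_pos; presburger)
  qed
qed

lemma Hor0:
  assumes "0 \<le> r" "r < 2*n" "2 \<le> n"
  shows "G (2*n) r 0 = G (2*n) (wr (2*n) (r+2)) 0 \<longleftrightarrow> r = n - 1 \<or> r = 2*n - 1"
proof -
  consider "r + 2 \<le> n" | "n \<le> r" "r + 2 < 2*n" | "r = n - 1" | "r = 2*n - 2" | "r = 2*n - 1" using assms by linarith
  then show ?thesis
  proof cases
    case 1
    then have "wr (2*n) (r+2) = r+2" unfolding wr_def using assms by simp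
    then show ?thesis unfolding G_def using 1 assms by (simp add: icd_pos; presburger)
  next
    case 2
    then have "wr (2*n) (r+2) = r+2" unfolding wr_def using assms by simp
    then show ?thesis unfolding G_def using 2 assms by (simp add: icd_pos; presburger)
  next
    case 3
    then have "wr (2*n) (r+2) = r+2" unfolding wr_def using assms by simp
    then show ?thesis unfolding G_def using 3 assms by (simp add: icd_pos)
  next
    case 4
    then have "wr (2*n) (r+2) = 0" unfolding wr_def using assms by simp
    then show ?thesis unfolding G_def using 4 assms by (simp add: icd_pos)
  next
    case 5
    then have "wr (2*n) (r+2) = 1" unfolding wr_def using assms by simp
    then show ?thesis unfolding G_def using 5 assms by (simp add: icd_pos)
  qed
qed


definition unres :: "int \<Rightarrow> int \<Rightarrow> int \<Rightarrow> bool" where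
  "unres n k r \<longleftrightarrow> (if k = 1 then (odd r \<and> r < n) \<or> (even r \<and> n \<le> r) else r = n - 1 \<or> r = 2*n - 1)"

lemma unres_char:
  assumes "0 \<le> q" "q < 2*n" "0 \<le> p" "p < 2*n" "k = 1 \<or> k = 2" "2 \<le> n"
  shows "G (2*n) q p = G (2*n) (wr (2*n) (q+k)) p \<longleftrightarrow> unres n k (wr (2*n) (q - p))"
proof -
  have r: "0 \<le> wr (2*n) (q-p) \<and> wr (2*n) (q-p) < 2*n" using assms unfolding wr_def by auto
  have q': "0 \<le> wr (2*n) (q+k) \<and> wr (2*n) (q+k) < 2*n" using assms unfolding wr_def by auto
  have "G (2*n) q p = G (2*n) (wr (2*n) (q-p)) 0" using REL assms by simp
  moreover have "G (2*n) (wr (2*n) (q+k)) p = G (2*n) (wr (2*n) (wr (2*n) (q+k) - p)) 0" using REL q' assms by simp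
  moreover have "wr (2*n) (wr (2*n) (q+k) - p) = wr (2*n) (wr (2*n) (q-p) + k)" using wr_shift assms by simp
  ultimately have e: "G (2*n) q p = G (2*n) (wr (2*n) (q+k)) p \<longleftrightarrow>
     G (2*n) (wr (2*n) (q-p)) 0 = G (2*n) (wr (2*n) (wr (2*n) (q-p) + k)) 0" by simp
  from assms(5) show ?thesis
  proof
    assume "k = 1" then show ?thesis using e Rim0[of "wr (2*n) (q-p)" n] r assms unfolding unres_def by simp
  next
    assume "k = 2" then show ?thesis using e Hor0[of "wr (2*n) (q-p)" n] r assms unfolding unres_def by simp
  qed
qed

lemma UBodd:
  assumes "odd n" "3 \<le> n" "0 \<le> q" "q < 2*n" "k = 1 \<or> k = 2"
  shows "\<not> (unres n k (wr (2*n) (q - 0)) \<and> unres n k (wr (2*n) (q - 1)))"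
proof -
  have a: "wr (2*n) (q - 0) = q" using assms unfolding wr_def by simp
  have b: "wr (2*n) (q - 1) = (if q = 0 then 2*n-1 else q - 1)" using assms unfolding wr_def by simp
  show ?thesis unfolding a b unres_def using assms by presburger
qed

lemma UBeven:
  assumes "even n" "3 \<le> n" "0 \<le> q" "q < 2*n" "k = 1 \<or> k = 2"
  shows "\<not> (unres n k (wr (2*n) (q - 0)) \<and> unres n k (wr (2*n) (q - 2)) \<and> unres n k (wr (2*n) (q - 1)))"
proof -
  have a: "wr (2*n) (q - 0) = q" using assms unfolding wr_def by simp
  consider "q = 0" | "q = 1" | "2 \<le> q" using assms by linarith
  then show ?thesis
  proof cases
    case 1
    then have b: "wr (2*n) (q - 1) = 2*n-1" "wr (2*n) (q - 2) = 2*n-2" using assms unfolding wr_def by simp_all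
    from assms(5) show ?thesis
    proof
      assume k: "k = 1"
      show ?thesis unfolding a b unres_def k using assms 1 by simp
    next
      assume k: "k = 2"
      show ?thesis unfolding a b unres_def k using assms 1 by simp
    qed
  next
    case 2
    then have b: "wr (2*n) (q - 1) = 0" "wr (2*n) (q - 2) = 2*n-1" using assms unfolding wr_def by simp_all
    from assms(5) show ?thesis
    proof
      assume k: "k = 1"
      show ?thesis unfolding a b unres_def k using assms 2 by simp
    next
      assume k: "k = 2"
      show ?thesis unfolding a b unres_def k using assms 2 by simp
    qed
  next
    case 3
    then have b: "wr (2*n) (q - 1) = q - 1" "wr (2*n) (q - 2) = q - 2" using assms unfolding wr_def by simp_all
    from assms(5) show ?thesis
    proof
      assume k: "k = 1"
      have "\<not> ((odd q \<and> q < n \<or> even q \<and> n \<le> q) \<and> (odd (q-2) \<and> q-2 < n \<or> even (q-2) \<and> n \<le> q-2)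
          \<and> (odd (q-1) \<and> q-1 < n \<or> even (q-1) \<and> n \<le> q-1))"
        using assms 3 by presburger
      then show ?thesis unfolding a b unres_def k by simp
    next
      assume k: "k = 2"
      show ?thesis unfolding a b unres_def k using assms 3 by simp
    qed
  qed
qed

lemma LB1:
  assumes "3 \<le> n" "0 \<le> p" "p < 2*n"
  shows "\<exists>q. 0 \<le> q \<and> q < 2*n \<and> unres n 2 (wr (2*n) (q - p))"
proof (intro exI conjI)
  show "0 \<le> wr (2*n) (p+n-1)" "wr (2*n) (p+n-1) < 2*n" using assms unfolding wr_def by auto
  have "wr (2*n) (wr (2*n) (p+n-1) - p) = n - 1" using assms unfolding wr_def by auto
  then show "unres n 2 (wr (2*n) (wr (2*n) (p+n-1) - p))" unfolding unres_def by simp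
qed

lemma LB2:
  assumes "even n" "3 \<le> n" "0 \<le> p1" "p1 < 2*n" "0 \<le> p2" "p2 < 2*n"
  shows "\<exists>q k. 0 \<le> q \<and> q < 2*n \<and> (k = 1 \<or> k = 2) \<and> unres n k (wr (2*n) (q - p1)) \<and> unres n k (wr (2*n) (q - p2))"
proof -
  define t where "t = wr (2*n) (p2 - p1)"
  have t: "0 \<le> t" "t < 2*n" "p2 = (if p1 + t < 2*n then p1 + t else p1 + t - 2*n)"
    using assms unfolding t_def wr_def by auto
  consider "t = n" | "t \<noteq> n" "even t" "t < n" | "t \<noteq> n" "even t" "t > n" | "odd t" "t < n" | "odd t" "t > n"
    by linarith
  then show ?thesis
  proof cases
    case 1
    show ?thesis
      apply (rule exI[of _ "wr (2*n) (p1+n-1)"], rule exI[of _ 2])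
      using assms t 1 unfolding wr_def unres_def by auto
  next
    case 2
    show ?thesis
      apply (rule exI[of _ "wr (2*n) (p1+n-1)"], rule exI[of _ 1])
      using assms t 2 unfolding wr_def unres_def by (auto; presburger)
  next
    case 3
    show ?thesis
      apply (rule exI[of _ "wr (2*n) (p1+n)"], rule exI[of _ 1])
      using assms t 3 unfolding wr_def unres_def by (auto; presburger)
  next
    case 4
    show ?thesis
      apply (rule exI[of _ "wr (2*n) (p1+n)"], rule exI[of _ 1])
      using assms t 4 unfolding wr_def unres_def by (auto; presburger)
  next
    case 5
    show ?thesis
      apply (rule exI[of _ "wr (2*n) (p1+n-1)"], rule exI[of _ 1])
      using assms t 5 unfolding wr_def unres_def by (auto; presburger)
  qed
qed



lemma S_adj_sym: "S_adj n x y \<longleftrightarrow> S_adj n y x" unfolding S_adj_def by blast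

lemma adj_idx: "S_adj n x y \<Longrightarrow> idx x < n \<and> idx y < n"
  unfolding S_adj_char using nx_lt by auto

lemma wr_small: "0 \<le> x \<Longrightarrow> x < N \<Longrightarrow> wr N x = x" unfolding wr_def by simp

lemma adj_cases:
  assumes "S_adj n x y" "3 \<le> n"
  shows "(pos x = pos y \<and> ht x \<noteq> ht y) \<or>
    (ht x = ht y \<and> (\<exists>k. (k = 1 \<or> k = 2) \<and> (pos y = wr (2*int n) (pos x + k) \<or> pos x = wr (2*int n) (pos y + k))))"
proof -
  obtain i where i: "i < n" and h: "(x = A i \<and> y = A (nx n i)) \<or> (x = B i \<and> y = B (nx n i)) \<or>
      (x = C i \<and> y = C (nx n i)) \<or> (x = D i \<and> y = D (nx n i)) \<or>
      (x = A (nx n i) \<and> y = B i) \<or> (x = A i \<and> y = B i) \<or> (x = B i \<and> y = C i) \<or> (x = C i \<and> y = D i) \<or>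
      (y = A i \<and> x = A (nx n i)) \<or> (y = B i \<and> x = B (nx n i)) \<or>
      (y = C i \<and> x = C (nx n i)) \<or> (y = D i \<and> x = D (nx n i)) \<or>
      (y = A (nx n i) \<and> x = B i) \<or> (y = A i \<and> x = B i) \<or> (y = B i \<and> x = C i) \<or> (y = C i \<and> x = D i)"
    using assms(1) unfolding S_adj_char by blast
  have p0: "2*int (nx n i) = wr (2*int n) (2*int i + 2)" using wr_nx[of i n 0] i by simp
  have p1: "2*int (nx n i) + 1 = wr (2*int n) (2*int i + 1 + 2)" using wr_nx[of i n 1] i by (simp add: add.assoc)
  have p2: "2*int (nx n i) = wr (2*int n) (2*int i + 1 + 1)" using wr_nx[of i n 0] i by (simp add: add.assoc)
  have p3: "2*int i + 1 = wr (2*int n) (2*int i + 1)" using i by (simp add: wr_small)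
  show ?thesis using h
  proof (elim disjE)
  qed (use p0 p1 p2 p3 in \<open>force+\<close>)
qed

lemma res_iff:
  assumes "idx x < n" "idx y < n" "idx w < n"
  shows "resolves (S_vertices n) (S_adj n) w x y \<longleftrightarrow> ifd n x w \<noteq> ifd n y w"
  unfolding resolves_def using gdist_fd[of x n w] gdist_fd[of y n w] ifd_nonneg[of x n w] ifd_nonneg[of y n w] assms
  by (simp add: eq_nat_nat_iff)

lemma ifd_G: "ifd n x w = G (2*int n) (pos x) (pos w) + \<bar>ht x - ht w\<bar>"
  unfolding ifd_def G_def by simp

lemma ht_nonneg: "0 \<le> ht x" by (cases x) auto

lemma resolved_by:
  assumes n3: "3 \<le> n" and WV: "\<forall>w\<in>W. idx w < n" and w0: "w0 \<in> W" "ht w0 = 0"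
    and good: "\<And>q k. 0 \<le> q \<Longrightarrow> q < 2*int n \<Longrightarrow> k = 1 \<or> k = 2 \<Longrightarrow> \<exists>w\<in>W. \<not> unres (int n) k (wr (2*int n) (q - pos w))"
    and adj: "S_adj n x y"
  shows "\<exists>w\<in>W. resolves (S_vertices n) (S_adj n) w x y"
proof -
  have ix: "idx x < n" and iy: "idx y < n" using adj_idx[OF adj] by auto
  have n2: "2 \<le> int n" using n3 by simp
  have key: "\<exists>w\<in>W. ifd n a w \<noteq> ifd n b w"
    if ia: "idx a < n" and ib: "idx b < n" and hab: "ht a = ht b" and kk: "k = 1 \<or> k = 2"
       and pb: "pos b = wr (2*int n) (pos a + k)" for a b k
  proof -
    have ra: "0 \<le> pos a" "pos a < 2*int n" using pos_range[OF ia] by auto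
    obtain w where w: "w \<in> W" "\<not> unres (int n) k (wr (2*int n) (pos a - pos w))" using good[OF ra kk] by blast
    have rw: "0 \<le> pos w" "pos w < 2*int n" using pos_range WV w(1) by blast+
    have "G (2*int n) (pos a) (pos w) \<noteq> G (2*int n) (wr (2*int n) (pos a + k)) (pos w)"
      using unres_char[OF ra rw kk n2] w(2) by simp
    then have "ifd n a w \<noteq> ifd n b w" unfolding ifd_G using pb hab by simp
    then show ?thesis using w(1) by blast
  qed
  from adj_cases[OF adj n3] show ?thesis
  proof
    assume "pos x = pos y \<and> ht x \<noteq> ht y"
    then have "ifd n x w0 \<noteq> ifd n y w0" unfolding ifd_G using w0(2) ht_nonneg[of x] ht_nonneg[of y] by simp
    then show ?thesis using w0(1) res_iff ix iy WV by blast
  next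
    assume "ht x = ht y \<and> (\<exists>k. (k = 1 \<or> k = 2) \<and> (pos y = wr (2*int n) (pos x + k) \<or> pos x = wr (2*int n) (pos y + k)))"
    then obtain k where h: "ht x = ht y" "k = 1 \<or> k = 2"
      and d: "pos y = wr (2*int n) (pos x + k) \<or> pos x = wr (2*int n) (pos y + k)" by blast
    from d show ?thesis
    proof
      assume h3: "pos y = wr (2*int n) (pos x + k)"
      show ?thesis using key[OF ix iy h(1) h(2) h3] res_iff ix iy WV by blast
    next
      assume h3: "pos x = wr (2*int n) (pos y + k)"
      obtain w where "w \<in> W" "ifd n y w \<noteq> ifd n x w" using key[OF iy ix h(1)[symmetric] h(2) h3] by blast
      then show ?thesis using res_iff ix iy WV by metis
    qed
  qed
qed

definition rim :: "int \<Rightarrow> vtx" where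
  "rim q = (if even q then A (nat (q div 2)) else B (nat (q div 2)))"

lemma rim_A: "rim (2 * int m) = A m" unfolding rim_def by simp
lemma rim_B: "rim (2 * int m + 1) = B m" unfolding rim_def by simp

lemma rim_cases:
  assumes "0 \<le> q" "q < 2 * int n"
  obtains m where "m < n" "q = 2 * int m" | m where "m < n" "q = 2 * int m + 1"
proof -
  define m where "m = nat (q div 2)"
  have "m < n" using assms unfolding m_def by linarith
  moreover have "q = 2 * int m \<or> q = 2 * int m + 1" using assms unfolding m_def by linarith
  ultimately show ?thesis using that by blast
qed

lemma rim_props:
  assumes "0 \<le> q" "q < 2 * int n"
  shows "idx (rim q) < n \<and> ht (rim q) = 0 \<and> pos (rim q) = q"
  using assms by (cases rule: rim_cases) (auto simp: rim_A rim_B)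

lemma rim_adj:
  assumes "0 \<le> q" "q < 2 * int n" "k = 1 \<or> k = 2"
  shows "S_adj n (rim q) (rim (wr (2*int n) (q + k)))"
  using assms(1,2)
proof (cases rule: rim_cases)
  case (1 m)
  have p0: "2*int (nx n m) = wr (2*int n) (2*int m + 2)" using wr_nx[of m n 0] 1 by simp
  have p3: "2*int m + 1 = wr (2*int n) (2*int m + 1)" using 1 by (simp add: wr_small)
  from assms(3) show ?thesis
  proof
    assume "k = 1" then show ?thesis using 1 p3 adjI3[of m n] by (metis rim_A rim_B)
  next
    assume "k = 2" then show ?thesis using 1 p0 adjI1[of m n] S_adj_sym by (metis rim_A)
  qed
next
  case (2 m)
  have p1: "2*int (nx n m) + 1 = wr (2*int n) (2*int m + 1 + 2)" using wr_nx[of m n 1] 2 by (simp add: add.assoc)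
  have p2: "2*int (nx n m) = wr (2*int n) (2*int m + 1 + 1)" using wr_nx[of m n 0] 2 by (simp add: add.assoc)
  from assms(3) show ?thesis
  proof
    assume "k = 1" then show ?thesis using 2 p2 adjI3[of m n] by (metis rim_A rim_B)
  next
    assume "k = 2" then show ?thesis using 2 p1 adjI1[of m n] S_adj_sym by (metis rim_B)
  qed
qed

lemma not_lrs:
  assumes n3: "3 \<le> n" and q: "0 \<le> q" "q < 2*int n" and kk: "k = 1 \<or> k = 2"
    and WV: "\<forall>w\<in>W. idx w < n"
    and un: "\<forall>w\<in>W. unres (int n) k (wr (2*int n) (q - pos w))"
  shows "\<not> local_resolving_set (S_vertices n) (S_adj n) W"
proof
  assume lrs: "local_resolving_set (S_vertices n) (S_adj n) W"
  define x where "x = rim q"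
  define q' where "q' = wr (2*int n) (q + k)"
  define y where "y = rim q'"
  have rq': "0 \<le> q'" "q' < 2*int n" using q kk n3 unfolding q'_def wr_def by auto
  have px: "idx x < n" "ht x = 0" "pos x = q" using rim_props[OF q] unfolding x_def by auto
  have py: "idx y < n" "ht y = 0" "pos y = q'" using rim_props[OF rq'] unfolding y_def by auto
  have adj: "S_adj n x y" using rim_adj[OF q kk] unfolding x_def y_def q'_def .
  have n2: "2 \<le> int n" using n3 by simp
  obtain w where w: "w \<in> W" "resolves (S_vertices n) (S_adj n) w x y"
  proof -
    have "x \<in> S_vertices n" "y \<in> S_vertices n" using px py by (simp_all add: SV)
    then show ?thesis using lrs adj that unfolding local_resolving_set_def by blast
  qed
  have rw: "0 \<le> pos w" "pos w < 2*int n" using pos_range WV w(1) by blast+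
  have "G (2*int n) q (pos w) = G (2*int n) q' (pos w)"
    using unres_char[OF q rw kk n2] un w(1) unfolding q'_def by simp
  then have "ifd n x w = ifd n y w" unfolding ifd_G using px py by simp
  then show False using w res_iff px py WV by blast
qed



lemma sub2:
  assumes "finite W" "card W \<le> 2" "W \<subseteq> V" "a \<in> V"
  shows "\<exists>w1 w2. w1 \<in> V \<and> w2 \<in> V \<and> W \<subseteq> {w1, w2}"
proof (cases "W = {}")
  case True then show ?thesis using assms by blast
next
  case False
  then obtain w1 where w1: "w1 \<in> W" by blast
  have c: "card (W - {w1}) \<le> 1" using assms w1 by (simp add: card_Diff_singleton)
  show ?thesis
  proof (cases "W - {w1} = {}")
    case True then show ?thesis using w1 assms by blast
  next
    case False
    then obtain w2 where w2: "w2 \<in> W - {w1}" by blast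
    have "\<forall>a1\<in>W - {w1}. \<forall>a2\<in>W - {w1}. a1 = a2" using c assms(1) card_le_Suc0_iff_eq[of "W - {w1}"] by simp
    then have "W \<subseteq> {w1, w2}" using w2 by blast
    then show ?thesis using w1 w2 assms by blast
  qed
qed

lemma sub1:
  assumes "finite W" "card W \<le> 1" "W \<subseteq> V" "a \<in> V"
  shows "\<exists>w. w \<in> V \<and> W \<subseteq> {w}"
proof (cases "W = {}")
  case True then show ?thesis using assms by blast
next
  case False
  then obtain w where w: "w \<in> W" by blast
  have "\<forall>a1\<in>W. \<forall>a2\<in>W. a1 = a2" using assms card_le_Suc0_iff_eq[of W] by simp
  then show ?thesis using w assms by blast
qed

theorem theorem3p1:
  fixes n :: nat
  assumes "n \<ge> 3"
  shows "lmd (S_vertices n) (S_adj n) = (if odd n then 2 else 3)"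
proof -
  have n3: "3 \<le> n" using assms by simp
  have A0: "A 0 \<in> S_vertices n" using n3 by (simp add: SV)
  show ?thesis unfolding lmd_def
  proof (rule Least_equality)
    show "\<exists>W. local_resolving_set (S_vertices n) (S_adj n) W \<and> finite W \<and> card W = (if odd n then 2 else 3)"
    proof (cases "odd n")
      case True
      define W where "W = {A 0, B 0}"
      have WV: "\<forall>w\<in>W. idx w < n" using n3 unfolding W_def by auto
      have good: "\<exists>w\<in>W. \<not> unres (int n) k (wr (2*int n) (q - pos w))"
        if "0 \<le> q" "q < 2*int n" "k = 1 \<or> k = 2" for q k
        using UBodd[of "int n" q k] that True n3 unfolding W_def by auto
      have "local_resolving_set (S_vertices n) (S_adj n) W"
        unfolding local_resolving_set_def
      proof (intro conjI ballI impI)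
        show "W \<subseteq> S_vertices n" using WV by (auto simp: SV)
        fix u v assume "u \<in> S_vertices n" "v \<in> S_vertices n" "S_adj n u v"
        then show "\<exists>w\<in>W. resolves (S_vertices n) (S_adj n) w u v"
          using resolved_by[OF n3 WV _ _ good, of "A 0" u v] unfolding W_def by simp
      qed
      then show ?thesis using True unfolding W_def by (intro exI[of _ W]) (simp add: W_def)
    next
      case False
      define W where "W = {A 0, A 1, B 0}"
      have WV: "\<forall>w\<in>W. idx w < n" using n3 unfolding W_def by auto
      have good: "\<exists>w\<in>W. \<not> unres (int n) k (wr (2*int n) (q - pos w))"
        if "0 \<le> q" "q < 2*int n" "k = 1 \<or> k = 2" for q k
        using UBeven[of "int n" q k] that False n3 unfolding W_def by auto
      have "local_resolving_set (S_vertices n) (S_adj n) W"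
        unfolding local_resolving_set_def
      proof (intro conjI ballI impI)
        show "W \<subseteq> S_vertices n" using WV by (auto simp: SV)
        fix u v assume "u \<in> S_vertices n" "v \<in> S_vertices n" "S_adj n u v"
        then show "\<exists>w\<in>W. resolves (S_vertices n) (S_adj n) w u v"
          using resolved_by[OF n3 WV _ _ good, of "A 0" u v] unfolding W_def by simp
      qed
      then show ?thesis using False unfolding W_def by (intro exI[of _ W]) (simp add: W_def)
    qed
  next
    fix k assume "\<exists>W. local_resolving_set (S_vertices n) (S_adj n) W \<and> finite W \<and> card W = k"
    then obtain W where lrs: "local_resolving_set (S_vertices n) (S_adj n) W" and fin: "finite W" and cW: "card W = k"
      by blast
    have WsV: "W \<subseteq> S_vertices n" using lrs unfolding local_resolving_set_def by blast
    show "(if odd n then 2 else 3) \<le> k"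
    proof (rule ccontr)
      assume lt: "\<not> (if odd n then 2 else 3) \<le> k"
      show False
      proof (cases "odd n")
        case True
        then have "card W \<le> 1" using lt cW by simp
        then obtain w where w: "w \<in> S_vertices n" "W \<subseteq> {w}" using sub1 fin WsV A0 by metis
        have iw: "idx w < n" using w by (simp add: SV)
        obtain q where q: "0 \<le> q" "q < 2*int n" "unres (int n) 2 (wr (2*int n) (q - pos w))"
          using LB1[of "int n" "pos w"] n3 pos_range[OF iw] by auto
        have "\<not> local_resolving_set (S_vertices n) (S_adj n) W"
          apply (rule not_lrs[OF n3 q(1) q(2), of 2])
          using w q(3) by (auto simp: SV)
        then show False using lrs by simp
      next
        case False
        then have "card W \<le> 2" using lt cW by simp
        then obtain w1 w2 where w: "w1 \<in> S_vertices n" "w2 \<in> S_vertices n" "W \<subseteq> {w1, w2}"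
          using sub2 fin WsV A0 by metis
        have iw: "idx w1 < n" "idx w2 < n" using w by (simp_all add: SV)
        obtain q kk where q: "0 \<le> q" "q < 2*int n" "kk = 1 \<or> kk = 2"
          "unres (int n) kk (wr (2*int n) (q - pos w1))" "unres (int n) kk (wr (2*int n) (q - pos w2))"
          using LB2[of "int n" "pos w1" "pos w2"] n3 False pos_range[OF iw(1)] pos_range[OF iw(2)] by auto
        have "\<not> local_resolving_set (S_vertices n) (S_adj n) W"
          apply (rule not_lrs[OF n3 q(1) q(2) q(3)])
          using w q(4,5) iw by auto
        then show False using lrs by simp
      qed
    qed
  qed
qed

end
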